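(* Let $H=(V,E,C,\ell)$ be an edge-colored hypergraph of rank $r\ge 3$ with weights $w_e\ge 0$, let $x$ be any feasible solution of the \textsc{MinECC} LP relaxation with $x_e=\max_{v\in e}x_v^{\ell(e)}$ for every $e$, and let $Y$ be the output of GenColorRound applied to $x$ with interval $I=(\frac12,\frac23)$. Then for every edge $e\in E$, $\Pr[e\in\mathcal M_Y]\le 2\left(1-\frac{1}{r+1}\right)x_e$. Consequently, if $x$ is an optimal LP solution, the expected \textsc{MinECC} cost of $Y$ is at most $2\left(1-\frac{1}{r+1}\right)$ times the optimal \textsc{MinECC} value.
   Context: An edge-colored hypergraph is $H=(V,E,C,\ell)$ with node set $V$, a multiset $E$ of nonempty subsets of $V$, colors $C=[k]$, $\ell\colon E\to C$, weights $w_e\ge 0$; its rank is $r=\max_{e}|e|$. A node coloring $Y\colon V\to C$ makes a mistake at $e$ ($e\in\mathcal M_Y$) if some $v\in e$ has $Y[v]\ne\ell(e)$; \textsc{MinECC} minimizes $\sum_e w_e\mathbb 1[e\in\mathcal M_Y]$. The \textsc{MinECC} LP relaxation: minimize $\sum_e w_e x_e$ subject to $\sum_{i=1}^k x_v^i=k-1$ for all $v\in V$; $x_e\ge x_v^{\ell(e)}$ for all $e\in E$, $v\in e$; $0\le x_v^i\le1$; $0\le x_e\le 1$. GenColorRound with interval $I\subseteq[0,1]$, applied to a feasible LP solution $x$: draw $\rho$ uniformly at random from $I$ and, independently, a uniformly random permutation $\pi$ of $[k]$; let $S_i=\{v\in V: x_v^i<\rho\}$ (color $i$ wants $v$ if $x_v^i<\rho$);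 for each $v\in\bigcup_i S_i$ set $Y[v]=\pi(j)$ where $j$ is the largest index with $v\in S_{\pi(j)}$; nodes in no $S_i$ receive an arbitrary color. *)

theory Defs
  imports "HOL-Analysis.Analysis" "HOL-Combinatorics.Permutations"
begin

text \<open>Edge-colored hypergraph: node set V, edge index set E (edges may repeat,
  giving a multiset), edge map, colors {1..k}, label function lbl, weights w.\<close>

definition hypergraph_ok ::
  "'v set \<Rightarrow> 'e set \<Rightarrow> ('e \<Rightarrow> 'v set) \<Rightarrow> nat \<Rightarrow> ('e \<Rightarrow> nat) \<Rightarrow> ('e \<Rightarrow> real) \<Rightarrow> bool" where
  "hypergraph_ok V E edge k lbl w \<longleftrightarrow>
     finite V \<and> finite E \<and> E \<noteq> {} \<and>
     (\<forall>e\<in>E. edge e \<noteq> {} \<and> edge e \<subseteq> V \<and> lbl e \<in> {1..k} \<and> w e \<ge> 0)"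

definition hrank :: "'e set \<Rightarrow> ('e \<Rightarrow> 'v set) \<Rightarrow> nat" where
  "hrank E edge = Max ((\<lambda>e. card (edge e)) ` E)"

definition mistake :: "('e \<Rightarrow> 'v set) \<Rightarrow> ('e \<Rightarrow> nat) \<Rightarrow> ('v \<Rightarrow> nat) \<Rightarrow> 'e \<Rightarrow> bool" where
  "mistake edge lbl Y e \<longleftrightarrow> (\<exists>v\<in>edge e. Y v \<noteq> lbl e)"

definition ecc_cost ::
  "'e set \<Rightarrow> ('e \<Rightarrow> 'v set) \<Rightarrow> ('e \<Rightarrow> nat) \<Rightarrow> ('e \<Rightarrow> real) \<Rightarrow> ('v \<Rightarrow> nat) \<Rightarrow> real" where
  "ecc_cost E edge lbl w Y = (\<Sum>e\<in>E. w e * (if mistake edge lbl Y e then 1 else 0))"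

definition lp_feasible ::
  "'v set \<Rightarrow> 'e set \<Rightarrow> ('e \<Rightarrow> 'v set) \<Rightarrow> nat \<Rightarrow> ('e \<Rightarrow> nat) \<Rightarrow>
   ('v \<Rightarrow> nat \<Rightarrow> real) \<Rightarrow> ('e \<Rightarrow> real) \<Rightarrow> bool" where
  "lp_feasible V E edge k lbl xv xe \<longleftrightarrow>
     (\<forall>v\<in>V. (\<Sum>i=1..k. xv v i) = real k - 1) \<and>
     (\<forall>e\<in>E. \<forall>v\<in>edge e. xe e \<ge> xv v (lbl e)) \<and>
     (\<forall>v\<in>V. \<forall>i\<in>{1..k}. 0 \<le> xv v i \<and> xv v i \<le> 1) \<and>
     (\<forall>e\<in>E. 0 \<le> xe e \<and> xe e \<le> 1)"

definition lp_value :: "'e set \<Rightarrow> ('e \<Rightarrow> real) \<Rightarrow> ('e \<Rightarrow> real) \<Rightarrow> real" where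
  "lp_value E w xe = (\<Sum>e\<in>E. w e * xe e)"

definition lp_optimal ::
  "'v set \<Rightarrow> 'e set \<Rightarrow> ('e \<Rightarrow> 'v set) \<Rightarrow> nat \<Rightarrow> ('e \<Rightarrow> nat) \<Rightarrow> ('e \<Rightarrow> real) \<Rightarrow>
   ('v \<Rightarrow> nat \<Rightarrow> real) \<Rightarrow> ('e \<Rightarrow> real) \<Rightarrow> bool" where
  "lp_optimal V E edge k lbl w xv xe \<longleftrightarrow>
     lp_feasible V E edge k lbl xv xe \<and>
     (\<forall>xv' xe'. lp_feasible V E edge k lbl xv' xe' \<longrightarrow> lp_value E w xe \<le> lp_value E w xe')"

text \<open>Node v is wanted by color i iff xv v i < rho; it gets p j for the largest
  j in {1..k} with v wanted by p j; unwanted nodes get the arbitrary color dflt p v.\<close>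
definition gen_color_round ::
  "nat \<Rightarrow> ('v \<Rightarrow> nat \<Rightarrow> real) \<Rightarrow> ((nat \<Rightarrow> nat) \<Rightarrow> 'v \<Rightarrow> nat) \<Rightarrow> real \<Rightarrow> (nat \<Rightarrow> nat) \<Rightarrow> 'v \<Rightarrow> nat" where
  "gen_color_round k xv dflt rho p v =
     (if \<exists>j\<in>{1..k}. xv v (p j) < rho
      then p (Max {j\<in>{1..k}. xv v (p j) < rho})
      else dflt p v)"

definition color_perms :: "nat \<Rightarrow> (nat \<Rightarrow> nat) set" where
  "color_perms k = {p. p permutes {1..k}}"

text \<open>Probability of an event P rho p when rho is uniform on the open interval (a,b)
  and, independently, p is a uniformly random permutation of {1..k}.\<close>
definition round_prob :: "nat \<Rightarrow> real \<Rightarrow> real \<Rightarrow> (real \<Rightarrow> (nat \<Rightarrow> nat) \<Rightarrow> bool) \<Rightarrow> real" where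
  "round_prob k a b P =
     (\<Sum>p\<in>color_perms k. measure lborel {rho\<in>{a<..<b}. P rho p})
       / (real (card (color_perms k)) * (b - a))"

definition round_expect :: "nat \<Rightarrow> real \<Rightarrow> real \<Rightarrow> (real \<Rightarrow> (nat \<Rightarrow> nat) \<Rightarrow> real) \<Rightarrow> real" where
  "round_expect k a b f =
     (\<Sum>p\<in>color_perms k. (LINT rho:{a<..<b}|lborel. f rho p))
       / (real (card (color_perms k)) * (b - a))"

end

theory Submission
  imports Defs
begin

lemma perm_last_count:
  fixes c k :: nat and S :: "nat set"
  assumes S: "S \<subseteq> {1..k}" and c: "c \<in> S"
  shows "card (color_perms k) \<le> card S * card {p\<in>color_perms k. \<forall>i\<in>S. inv p i \<le> inv p c}"
proof -
  define P where "P s = {p\<in>color_perms k. \<forall>i\<in>S. inv p i \<le> inv p s}" for s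
  have finS: "finite S" using S finite_subset by blast
  have finperm: "finite (color_perms k)" unfolding color_perms_def by (rule finite_permutations) simp
  have cover: "color_perms k \<subseteq> (\<Union>s\<in>S. P s)"
  proof
    fix p assume p: "p \<in> color_perms k"
    have ne: "inv p ` S \<noteq> {}" using c by blast
    have "Max (inv p ` S) \<in> inv p ` S" using Max_in[OF _ ne] finS by blast
    then obtain s where s: "s \<in> S" "Max (inv p ` S) = inv p s" by blast
    have "\<forall>i\<in>S. inv p i \<le> inv p s" using s finS by (metis Max_ge finite_imageI imageI)
    then show "p \<in> (\<Union>s\<in>S. P s)" using s p unfolding P_def by blast
  qed
  have le: "card (P s) \<le> card (P c)" if s: "s \<in> S" for s
  proof -
    have "inj_on (\<lambda>p. Transposition.transpose c s \<circ> p) (P s)"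
      by (rule inj_onI) (metis comp_assoc transpose_comp_involutory comp_id id_comp)
    moreover have "(\<lambda>p. Transposition.transpose c s \<circ> p) ` P s \<subseteq> P c"
    proof
      fix q assume "q \<in> (\<lambda>p. Transposition.transpose c s \<circ> p) ` P s"
      then obtain p where p: "p \<in> P s" and q: "q = Transposition.transpose c s \<circ> p" by blast
      have pp: "p permutes {1..k}" using p unfolding P_def color_perms_def by auto
      have tp: "Transposition.transpose c s permutes {1..k}" using S c s by (intro permutes_swap_id) auto
      have qp: "q permutes {1..k}" unfolding q by (rule permutes_compose[OF pp tp])
      have invq: "inv q = inv p \<circ> Transposition.transpose c s"
        unfolding q using pp tp
        by (simp add: o_inv_distrib permutes_bij bij_is_inj bij_is_surj permutes_inj permutes_surj)
      have "\<forall>i\<in>S. inv q i \<le> inv q c"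
      proof
        fix i assume i: "i \<in> S"
        have "Transposition.transpose c s i \<in> S" using i c s by (cases "i = c"; cases "i = s") auto
        then show "inv q i \<le> inv q c" using p unfolding P_def invq by auto
      qed
      then show "q \<in> P c" using qp unfolding P_def color_perms_def by auto
    qed
    moreover have "finite (P c)" using finperm unfolding P_def by auto
    ultimately show ?thesis by (meson card_inj_on_le)
  qed
  have "card (color_perms k) \<le> card (\<Union>s\<in>S. P s)"
    using cover finS finperm by (intro card_mono) (auto simp: P_def)
  also have "\<dots> \<le> (\<Sum>s\<in>S. card (P s))" by (rule card_UN_le[OF finS])
  also have "\<dots> \<le> (\<Sum>s\<in>S. card (P c))" by (rule sum_mono) (rule le)
  also have "\<dots> = card S * card (P c)" by simp
  finally show ?thesis unfolding P_def .
qed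


lemma meas_gen:
  fixes a :: "'i \<Rightarrow> real"
  assumes I: "finite I" and PQ: "\<And>\<rho>. P \<rho> = Q {i\<in>I. a i < \<rho>}"
  shows "{\<rho>. P \<rho>} \<in> sets borel"
proof -
  have eq: "{\<rho>. P \<rho>} = (\<Union>S\<in>{S\<in>Pow I. Q S}. {\<rho>. \<forall>i\<in>I. (i \<in> S) = (a i < \<rho>)})"
  proof (intro set_eqI iffI)
    fix \<rho> assume "\<rho> \<in> {\<rho>. P \<rho>}"
    then show "\<rho> \<in> (\<Union>S\<in>{S\<in>Pow I. Q S}. {\<rho>. \<forall>i\<in>I. (i \<in> S) = (a i < \<rho>)})"
      using PQ by (intro UN_I[of "{i\<in>I. a i < \<rho>}"]) auto
  next
    fix \<rho> assume "\<rho> \<in> (\<Union>S\<in>{S\<in>Pow I. Q S}. {\<rho>. \<forall>i\<in>I. (i \<in> S) = (a i < \<rho>)})"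
    then obtain S where S: "S \<subseteq> I" "Q S" "\<forall>i\<in>I. (i \<in> S) = (a i < \<rho>)" by auto
    then have "S = {i\<in>I. a i < \<rho>}" by auto
    then show "\<rho> \<in> {\<rho>. P \<rho>}" using PQ S by auto
  qed
  have "\<And>S. {\<rho>::real. \<forall>i\<in>I. (i \<in> S) = (a i < \<rho>)} \<in> sets borel"
    using I by measurable
  then show ?thesis unfolding eq using I by (intro sets.finite_UN) auto
qed


lemma lp_sub:
  assumes feas: "lp_feasible V E edge k lbl xv xe" and v: "v \<in> V" and F: "F \<subseteq> {1..k}"
  shows "(\<Sum>i\<in>F. 1 - xv v i) \<le> 1"
proof -
  have s: "(\<Sum>i=1..k. xv v i) = real k - 1" and b: "\<forall>i\<in>{1..k}. 0 \<le> xv v i \<and> xv v i \<le> 1"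
    using feas v unfolding lp_feasible_def by auto
  have "(\<Sum>i\<in>F. 1 - xv v i) \<le> (\<Sum>i=1..k. 1 - xv v i)"
    using F b by (intro sum_mono2) auto
  also have "\<dots> = 1" using s by (simp add: sum_subtractf)
  finally show ?thesis .
qed

lemma at_most_one_other:
  assumes feas: "lp_feasible V E edge k lbl xv xe" and v: "v \<in> V" and c: "c \<in> {1..k}"
    and xc: "xv v c < \<rho>" and r: "\<rho> < 2/3"
  shows "card {i\<in>{1..k}. i \<noteq> c \<and> xv v i < \<rho>} \<le> 1"
proof -
  have "\<forall>i\<in>{i\<in>{1..k}. i \<noteq> c \<and> xv v i < \<rho>}. \<forall>j\<in>{i\<in>{1..k}. i \<noteq> c \<and> xv v i < \<rho>}. i = j"
  proof (intro ballI, rule ccontr)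
    fix i j assume i: "i \<in> {i\<in>{1..k}. i \<noteq> c \<and> xv v i < \<rho>}" and j: "j \<in> {i\<in>{1..k}. i \<noteq> c \<and> xv v i < \<rho>}"
      and ij: "i \<noteq> j"
    have "(\<Sum>l\<in>{c,i,j}. 1 - xv v l) \<le> 1" using lp_sub[OF feas v, of "{c,i,j}"] c i j by auto
    moreover have "(\<Sum>l\<in>{c,i,j}. 1 - xv v l) = (1 - xv v c) + (1 - xv v i) + (1 - xv v j)"
      using i j ij by simp
    ultimately show False using i j xc r by auto
  qed
  then show ?thesis using card_le_Suc0_iff_eq[of "{i\<in>{1..k}. i \<noteq> c \<and> xv v i < \<rho>}"] by simp
qed

lemma no_other:
  assumes feas: "lp_feasible V E edge k lbl xv xe" and v: "v \<in> V" and c: "c \<in> {1..k}"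
    and xc: "xv v c \<le> X" and r: "\<rho> \<le> 1 - X" and i: "i \<in> {1..k}" "i \<noteq> c"
  shows "\<not> xv v i < \<rho>"
proof
  assume a: "xv v i < \<rho>"
  have "(\<Sum>l\<in>{c,i}. 1 - xv v l) \<le> 1" using lp_sub[OF feas v, of "{c,i}"] c i by auto
  then show False using i xc r a by auto
qed



lemma count_bound:
  assumes H: "hypergraph_ok V E edge k lbl w" and feas: "lp_feasible V E edge k lbl xv xe"
    and e: "e \<in> E" and cr: "card (edge e) \<le> r"
    and r2: "\<rho> < 2/3" and X: "xe e < \<rho>"
  shows "real (card {p\<in>color_perms k. \<exists>i\<in>{1..k}. inv p (lbl e) < inv p i \<and> (\<exists>v\<in>edge e. xv v i < \<rho>)})
     \<le> (if 1 - xe e < \<rho> then (1 - 1/(real r+1)) * real (card (color_perms k)) else 0)"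
proof -
  define c where "c = lbl e"
  have c: "c \<in> {1..k}" and eV: "edge e \<subseteq> V" and finV: "finite V"
    using H e unfolding hypergraph_ok_def c_def by auto
  have fine: "finite (edge e)" using eV finV finite_subset by blast
  have xc: "\<forall>v\<in>edge e. xv v c \<le> xe e" using feas e unfolding lp_feasible_def c_def by auto
  have finperm: "finite (color_perms k)" unfolding color_perms_def by (rule finite_permutations) simp
  define T where "T = {i\<in>{1..k}. i \<noteq> c \<and> (\<exists>v\<in>edge e. xv v i < \<rho>)}"
  define S where "S = insert c T"
  define B where "B = {p\<in>color_perms k. \<exists>i\<in>{1..k}. inv p c < inv p i \<and> (\<exists>v\<in>edge e. xv v i < \<rho>)}"
  define Pc where "Pc = {p\<in>color_perms k. \<forall>i\<in>S. inv p i \<le> inv p c}"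
  have BT: "B = color_perms k - Pc"
  proof (rule set_eqI, rule iffI)
    fix p assume "p \<in> B"
    then obtain i v where "p \<in> color_perms k" "i \<in> {1..k}" "inv p c < inv p i" "v \<in> edge e" "xv v i < \<rho>"
      unfolding B_def by blast
    moreover then have "i \<in> S" unfolding S_def T_def by auto
    ultimately show "p \<in> color_perms k - Pc" unfolding Pc_def by (auto simp: not_le)
  next
    fix p assume "p \<in> color_perms k - Pc"
    then obtain i where p: "p \<in> color_perms k" "i \<in> S" "inv p c < inv p i"
      unfolding Pc_def by (auto simp: not_le)
    then have "i \<in> T" unfolding S_def by auto
    then show "p \<in> B" using p unfolding B_def T_def by blast
  qed
  show ?thesis
  proof (cases "1 - xe e < \<rho>")
    case False
    have "T = {}" unfolding T_def
      using no_other[OF feas _ c] xc eV False by force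
    then have "B = {}" unfolding BT Pc_def S_def by auto
    then have "card B = 0" by simp
    then show ?thesis using False unfolding B_def c_def by simp
  next
    case True
    have ST: "S \<subseteq> {1..k}" "c \<in> S" unfolding S_def T_def using c by auto
    have N: "card (color_perms k) \<le> card S * card Pc"
      unfolding Pc_def by (rule perm_last_count[OF ST])
    have "T = (\<Union>v\<in>edge e. {i\<in>{1..k}. i \<noteq> c \<and> xv v i < \<rho>})" unfolding T_def by auto
    then have "card T \<le> (\<Sum>v\<in>edge e. card {i\<in>{1..k}. i \<noteq> c \<and> xv v i < \<rho>})"
      using card_UN_le[OF fine] by simp
    also have "\<dots> \<le> (\<Sum>v\<in>edge e. 1)"
      using at_most_one_other[OF feas _ c _ r2] xc X eV
      by (intro sum_mono) (meson le_less_trans subsetD)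
    finally have "card T \<le> card (edge e)" by simp
    moreover have "finite T" unfolding T_def by auto
    ultimately have cS: "card S \<le> r + 1" unfolding S_def using cr
      by (simp add: card_insert_if)
    have "card S * card Pc \<le> (r+1) * card Pc" using cS by (rule mult_right_mono) simp
    with N have n3: "card (color_perms k) \<le> (r+1) * card Pc" by (rule order.trans)
    then have "real (card (color_perms k)) \<le> real ((r+1) * card Pc)" by (simp only: of_nat_le_iff)
    then have N2: "real (card (color_perms k)) \<le> (real r + 1) * real (card Pc)" by (simp add: distrib_right)
    have "Pc \<subseteq> color_perms k" unfolding Pc_def by auto
    then have "card B = card (color_perms k) - card Pc" unfolding BT
      using finperm by (simp add: card_Diff_subset finite_subset)
    moreover have "card Pc \<le> card (color_perms k)" using \<open>Pc \<subseteq> _\<close> finperm card_mono by blast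
    ultimately have cB: "real (card B) = real (card (color_perms k)) - real (card Pc)" by simp
    have "real (card (color_perms k)) / (real r + 1) \<le> real (card Pc)"
      using N2 by (simp add: divide_le_eq mult.commute add_pos_nonneg)
    then have "real (card B) \<le> real (card (color_perms k)) - real (card (color_perms k)) / (real r + 1)"
      using cB by linarith
    also have "\<dots> = (1 - 1/(real r+1)) * real (card (color_perms k))" by (simp add: algebra_simps)
    finally show ?thesis using True unfolding B_def c_def by simp
  qed
qed


lemma mistake_meas:
  assumes fin: "finite (edge e)"
  shows "{\<rho>. mistake edge lbl (gen_color_round k xv dflt \<rho> p) e} \<in> sets borel"
proof (rule meas_gen[where I="edge e \<times> {1..k}" and a="\<lambda>(v,j). xv v (p j)"
      and Q="\<lambda>S. \<exists>v\<in>edge e. (if \<exists>j\<in>{1..k}. (v,j)\<in>S then p (Max {j\<in>{1..k}. (v,j)\<in>S}) else dflt p v) \<noteq> lbl e"])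
  show "finite (edge e \<times> {1..k})" using fin by simp
next
  fix \<rho>
  let ?M = "{i \<in> edge e \<times> {1..k}. (case i of (v, j) \<Rightarrow> xv v (p j)) < \<rho>}"
  have eq1: "\<And>v. v \<in> edge e \<Longrightarrow> {j\<in>{1..k}. (v,j) \<in> ?M} = {j\<in>{1..k}. xv v (p j) < \<rho>}" by auto
  have eq2: "\<And>v. v \<in> edge e \<Longrightarrow> (\<exists>j\<in>{1..k}. (v,j) \<in> ?M) = (\<exists>j\<in>{1..k}. xv v (p j) < \<rho>)" by auto
  show "mistake edge lbl (gen_color_round k xv dflt \<rho> p) e =
    (\<exists>v\<in>edge e. (if \<exists>j\<in>{1..k}. (v,j)\<in>?M then p (Max {j\<in>{1..k}. (v,j)\<in>?M}) else dflt p v) \<noteq> lbl e)"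
    unfolding mistake_def gen_color_round_def
    by (rule bex_cong[OF refl]) (simp only: eq1 eq2)
qed

lemma measure_Ioc_max: "measure lborel {a<..b::real} = max 0 (b - a)"
  by (cases "a \<le> b") auto

lemma measure_Ioo_max: "measure lborel {a<..<b::real} = max 0 (b - a)"
  by (cases "a \<le> b") auto


lemma arith_final:
  fixes q X :: real
  assumes "3/4 \<le> q" "q \<le> 1" "0 \<le> X" "X \<le> 1"
  shows "6 * (max 0 (min X (2/3) - 1/2) + q * max 0 (2/3 - max (1/2) (max X (1-X)))) \<le> 2*q*X"
proof (cases "X \<le> 1/3")
  case True
  then show ?thesis using assms by (simp add: max_def min_def)
next
  case F1: False
  show ?thesis
  proof (cases "X \<le> 1/2")
    case True
    then have "6 * (max 0 (min X (2/3) - 1/2) + q * max 0 (2/3 - max (1/2) (max X (1-X)))) = 6*q*(X - 1/3)"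
      using F1 by (simp add: max_def min_def)
    also have "\<dots> \<le> 2*q*X" using True assms by (simp add: algebra_simps)
    finally show ?thesis .
  next
    case F2: False
    show ?thesis
    proof (cases "X \<le> 2/3")
      case True
      then have "6 * (max 0 (min X (2/3) - 1/2) + q * max 0 (2/3 - max (1/2) (max X (1-X)))) = 6*(X - 1/2) + 6*q*(2/3 - X)"
        using F2 by (simp add: max_def min_def)
      also have "\<dots> \<le> 2*q*X"
      proof -
        have "(6 - 8*q) * (X - 1/2) \<le> 0" using assms F2 by (intro mult_nonpos_nonneg) auto
        then show ?thesis by (simp add: algebra_simps)
      qed
      finally show ?thesis .
    next
      case False
      then have "6 * (max 0 (min X (2/3) - 1/2) + q * max 0 (2/3 - max (1/2) (max X (1-X)))) = 1"
        by (simp add: max_def min_def)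
      also have "\<dots> \<le> 2*q*X"
      proof -
        have "2 * (3/4) * (2/3) \<le> 2*q*X" using assms False by (intro mult_mono) auto
        then show ?thesis by simp
      qed
      finally show ?thesis .
    qed
  qed
qed


lemma edge_bound:
  assumes H: "hypergraph_ok V E edge k lbl w" and feas: "lp_feasible V E edge k lbl xv xe"
    and e: "e \<in> E" and cr: "card (edge e) \<le> r" and r3: "3 \<le> r"
  shows "round_prob k (1/2) (2/3) (\<lambda>\<rho> p. mistake edge lbl (gen_color_round k xv dflt \<rho> p) e)
         \<le> 2 * (1 - 1 / (real r + 1)) * xe e"
proof -
  define c where "c = lbl e"
  define X where "X = xe e"
  define N where "N = card (color_perms k)"
  define q where "q = 1 - 1 / (real r + 1)"
  have c: "c \<in> {1..k}" and eV: "edge e \<subseteq> V" and finV: "finite V"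
    using H e unfolding hypergraph_ok_def c_def by auto
  have fine: "finite (edge e)" using eV finV finite_subset by blast
  have xc: "\<forall>v\<in>edge e. xv v c \<le> X" using feas e unfolding lp_feasible_def c_def X_def by auto
  have X01: "0 \<le> X" "X \<le> 1" using feas e unfolding lp_feasible_def X_def by auto
  have finperm: "finite (color_perms k)" unfolding color_perms_def by (rule finite_permutations) simp
  have Npos: "N > 0" unfolding N_def color_perms_def
    using card_permutations[of "{1..k}" k] by simp
  define I where "I = {1/2<..<2/3::real}"
  define A where "A p = {\<rho>\<in>I. mistake edge lbl (gen_color_round k xv dflt \<rho> p) e}" for p :: "nat \<Rightarrow> nat"
  define L where "L = {1/2<..min X (2/3)}"
  define B where "B p = {\<rho>\<in>I. X < \<rho> \<and> (\<exists>i\<in>{1..k}. inv p c < inv p i \<and> (\<exists>v\<in>edge e. xv v i < \<rho>))}" for p :: "nat \<Rightarrow> nat"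
  define R where "R = {max (1/2) (max X (1-X)) <..< 2/3::real}"
  have Icc: "{1/2..2/3::real} \<in> fmeasurable lborel"
    using fmeasurable_cbox[of "1/2::real" "2/3"] by simp
  have fm: "S \<in> fmeasurable lborel" if "S \<subseteq> {1/2..2/3::real}" "S \<in> sets borel" for S
    using fmeasurableI2[OF Icc that(1)] that(2) by simp
  have Ameas: "A p \<in> sets borel" for p
  proof -
    have "A p = I \<inter> {\<rho>. mistake edge lbl (gen_color_round k xv dflt \<rho> p) e}" unfolding A_def by auto
    then show ?thesis using mistake_meas[of edge e lbl k xv dflt p, OF fine] unfolding I_def by simp
  qed
  have Bmeas: "B p \<in> sets borel" for p
  proof -
    define G where "G = {i\<in>{1..k}. inv p c < inv p i}"
    have "B p = I \<inter> {X<..} \<inter> (\<Union>i\<in>G. \<Union>v\<in>edge e. {xv v i<..})"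
      unfolding B_def G_def by auto
    moreover have "open (I \<inter> {X<..} \<inter> (\<Union>i\<in>G. \<Union>v\<in>edge e. {xv v i<..}))"
      unfolding I_def by (intro open_Int open_UN ballI) auto
    ultimately show ?thesis by (simp add: borel_open)
  qed
  have Lmeas: "L \<in> sets borel" unfolding L_def by simp
  have LB: "A p \<subseteq> L \<union> B p" if p: "p \<in> color_perms k" for p
  proof
    fix \<rho> assume "\<rho> \<in> A p"
    then have rI: "\<rho> \<in> I" and mis: "mistake edge lbl (gen_color_round k xv dflt \<rho> p) e" unfolding A_def by auto
    show "\<rho> \<in> L \<union> B p"
    proof (cases "\<rho> \<le> X")
      case True then show ?thesis using rI unfolding L_def I_def by auto
    next
      case False
      from mis obtain v where v: "v \<in> edge e" and Yv: "gen_color_round k xv dflt \<rho> p v \<noteq> c"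
        unfolding mistake_def c_def by auto
      have pp: "p permutes {1..k}" using p unfolding color_perms_def by auto
      define jc where "jc = inv p c"
      have jc: "jc \<in> {1..k}" "p jc = c" unfolding jc_def
        using permutes_in_image[OF permutes_inv[OF pp]] c permutes_inverses[OF pp] by auto
      define J where "J = {j\<in>{1..k}. xv v (p j) < \<rho>}"
      have jcJ: "jc \<in> J" unfolding J_def using jc xc v False by auto
      have finJ: "finite J" unfolding J_def by auto
      have ex: "\<exists>j\<in>{1..k}. xv v (p j) < \<rho>" using jcJ unfolding J_def by blast
      have "gen_color_round k xv dflt \<rho> p v = p (Max J)"
        unfolding gen_color_round_def J_def by (rule if_P[OF ex])
      then have Yv2: "p (Max J) \<noteq> c" using Yv by simp
      have mJ: "Max J \<in> J" using Max_in[OF finJ] jcJ by auto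
      have "jc \<le> Max J" using Max_ge[OF finJ jcJ] .
      moreover have "jc \<noteq> Max J" using Yv2 jc by auto
      ultimately have lt: "jc < Max J" by simp
      define i where "i = p (Max J)"
      have iK: "i \<in> {1..k}" unfolding i_def using mJ permutes_in_image[OF pp] unfolding J_def by auto
      have "inv p i = Max J" unfolding i_def using permutes_inverses[OF pp] by simp
      moreover have "xv v i < \<rho>" using mJ unfolding J_def i_def by auto
      ultimately have "inv p c < inv p i \<and> (\<exists>v\<in>edge e. xv v i < \<rho>)"
        using lt v unfolding jc_def by auto
      then have "\<exists>i\<in>{1..k}. inv p c < inv p i \<and> (\<exists>v\<in>edge e. xv v i < \<rho>)"
        using iK by blast
      then have "\<rho> \<in> B p" using rI False unfolding B_def by auto
      then show ?thesis by simp
    qed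
  qed
  have Lsub: "L \<subseteq> {1/2..2/3}" unfolding L_def by auto
  have Bsub: "B p \<subseteq> {1/2..2/3}" for p unfolding B_def I_def by auto
  have Rsub: "R \<subseteq> {1/2..2/3}" unfolding R_def by auto
  have mA: "measure lborel (A p) \<le> measure lborel L + measure lborel (B p)" if p: "p \<in> color_perms k" for p
  proof -
    have "L \<union> B p \<in> sets borel" using Lmeas Bmeas by blast
    then have fLB: "L \<union> B p \<in> fmeasurable lborel" using Lsub Bsub by (intro fm) auto
    have "A p \<in> sets lborel" using Ameas by simp
    then have "measure lborel (A p) \<le> measure lborel (L \<union> B p)"
      using measure_mono_fmeasurable[OF LB[OF p] _ fLB] by blast
    also have "\<dots> \<le> measure lborel L + measure lborel (B p)"
      using Lmeas Bmeas by (intro measure_Un_le) auto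
    finally show ?thesis .
  qed
  have Bint: "integrable lborel (indicator (B p) :: real \<Rightarrow> real)" for p
  proof -
    have "B p \<in> fmeasurable lborel" using fm[OF Bsub Bmeas] .
    then show ?thesis unfolding fmeasurable_def by (intro integrable_real_indicator) auto
  qed
  have Rint: "integrable lborel (indicator R :: real \<Rightarrow> real)"
  proof -
    have "R \<in> sets borel" unfolding R_def by simp
    then have "R \<in> fmeasurable lborel" using fm[OF Rsub] by blast
    then show ?thesis unfolding fmeasurable_def by (intro integrable_real_indicator) auto
  qed
  have pw: "(\<Sum>p\<in>color_perms k. indicator (B p) \<rho>) \<le> q * real N * indicator R \<rho>" for \<rho> :: real
  proof -
    have "(\<Sum>p\<in>color_perms k. indicator (B p) \<rho> :: real) = (\<Sum>p\<in>color_perms k. if \<rho> \<in> B p then 1 else 0)"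
      by (intro sum.cong) (auto simp: indicator_def)
    also have "\<dots> = real (card (color_perms k \<inter> {p. \<rho> \<in> B p}))"
      using finperm by (simp add: sum.If_cases)
    also have "color_perms k \<inter> {p. \<rho> \<in> B p} = {p\<in>color_perms k. \<rho> \<in> B p}" by blast
    finally have eq: "(\<Sum>p\<in>color_perms k. indicator (B p) \<rho> :: real) = real (card {p\<in>color_perms k. \<rho> \<in> B p})" .
    have q0: "0 \<le> q" unfolding q_def by (simp add: field_simps)
    show ?thesis
    proof (cases "\<rho> \<in> I \<and> X < \<rho>")
      case False
      then have "{p\<in>color_perms k. \<rho> \<in> B p} = {}" unfolding B_def by auto
      then have "(\<Sum>p\<in>color_perms k. indicator (B p) \<rho> :: real) = 0" using eq by simp
      moreover have "0 \<le> q * real N * indicator R \<rho>" using q0 by simp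
      ultimately show ?thesis by simp
    next
      case True
      have r2: "\<rho> < 2/3" and X': "xe e < \<rho>" using True unfolding I_def X_def by auto
      have seq: "{p\<in>color_perms k. \<rho> \<in> B p} = {p\<in>color_perms k. \<exists>i\<in>{1..k}. inv p (lbl e) < inv p i \<and> (\<exists>v\<in>edge e. xv v i < \<rho>)}"
        using True unfolding B_def c_def by simp
      have cb: "real (card {p\<in>color_perms k. \<rho> \<in> B p}) \<le> (if 1 - xe e < \<rho> then q * real N else 0)"
        unfolding seq q_def N_def by (rule count_bound[OF H feas e cr r2 X'])
      have ind: "(if 1 - xe e < \<rho> then q * real N else 0) \<le> q * real N * indicator R \<rho>"
      proof (cases "1 - xe e < \<rho>")
        case T2: True
        then have "\<rho> \<in> R" using True unfolding R_def I_def X_def by auto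
        then show ?thesis using T2 by simp
      next
        case False
        then show ?thesis using q0 by simp
      qed
      show ?thesis using eq cb ind by linarith
    qed
  qed
  have sumB: "(\<Sum>p\<in>color_perms k. measure lborel (B p)) \<le> q * real N * measure lborel R"
  proof -
    have "(\<Sum>p\<in>color_perms k. measure lborel (B p)) = (\<Sum>p\<in>color_perms k. integral\<^sup>L lborel (indicator (B p)))"
      by simp
    also have "\<dots> = integral\<^sup>L lborel (\<lambda>\<rho>. \<Sum>p\<in>color_perms k. indicator (B p) \<rho>)"
      using integral_sum[where I="color_perms k" and f="\<lambda>p \<rho>. indicator (B p) \<rho> :: real"] Bint by (simp add: fun_eq_iff)
    also have "\<dots> \<le> integral\<^sup>L lborel (\<lambda>\<rho>. q * real N * indicator R \<rho>)"
      by (rule integral_mono) (use Bint Rint pw in auto)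
    also have "\<dots> = q * real N * measure lborel R" using Rint by simp
    finally show ?thesis .
  qed
  have sumA: "(\<Sum>p\<in>color_perms k. measure lborel (A p)) \<le> real N * measure lborel L + q * real N * measure lborel R"
  proof -
    have "(\<Sum>p\<in>color_perms k. measure lborel (A p)) \<le> (\<Sum>p\<in>color_perms k. measure lborel L + measure lborel (B p))"
      by (rule sum_mono) (rule mA)
    also have "\<dots> = real N * measure lborel L + (\<Sum>p\<in>color_perms k. measure lborel (B p))"
      by (simp add: sum.distrib N_def)
    finally show ?thesis using sumB by linarith
  qed
  have q34: "3/4 \<le> q" "q \<le> 1" unfolding q_def using r3 by (auto simp: field_simps)
  have "round_prob k (1/2) (2/3) (\<lambda>\<rho> p. mistake edge lbl (gen_color_round k xv dflt \<rho> p) e)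
        = (\<Sum>p\<in>color_perms k. measure lborel (A p)) / (real N * (1/6))"
    unfolding round_prob_def A_def I_def N_def by simp
  also have "\<dots> \<le> (real N * measure lborel L + q * real N * measure lborel R) / (real N * (1/6))"
    using sumA Npos by (intro divide_right_mono) auto
  also have "\<dots> = 6 * (measure lborel L + q * measure lborel R)"
    using Npos by (simp add: field_simps)
  also have "\<dots> = 6 * (max 0 (min X (2/3) - 1/2) + q * max 0 (2/3 - max (1/2) (max X (1-X))))"
    unfolding L_def R_def measure_Ioc_max measure_Ioo_max ..
  also have "\<dots> \<le> 2 * q * X" by (rule arith_final[OF q34 X01])
  finally show ?thesis unfolding q_def X_def .
qed


lemma expect_eq:
  assumes H: "hypergraph_ok V E edge k lbl w"
  shows "round_expect k (1/2) (2/3) (\<lambda>\<rho> p. ecc_cost E edge lbl w (gen_color_round k xv dflt \<rho> p))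
    = (\<Sum>e\<in>E. w e * round_prob k (1/2) (2/3) (\<lambda>\<rho> p. mistake edge lbl (gen_color_round k xv dflt \<rho> p) e))"
proof -
  define I where "I = {1/2<..<2/3::real}"
  define A where "A e p = {\<rho>\<in>I. mistake edge lbl (gen_color_round k xv dflt \<rho> p) e}" for e and p :: "nat \<Rightarrow> nat"
  define D where "D = real (card (color_perms k)) * (2/3 - 1/2)"
  have finE: "finite E" and finV: "finite V" and eV: "\<And>e. e \<in> E \<Longrightarrow> edge e \<subseteq> V"
    using H unfolding hypergraph_ok_def by auto
  have Icc: "{1/2..2/3::real} \<in> fmeasurable lborel"
    using fmeasurable_cbox[of "1/2::real" "2/3"] by simp
  have Aint: "integrable lborel (indicator (A e p) :: real \<Rightarrow> real)" if e: "e \<in> E" for e p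
  proof -
    have fine: "finite (edge e)" using eV[OF e] finV finite_subset by blast
    have "A e p = I \<inter> {\<rho>. mistake edge lbl (gen_color_round k xv dflt \<rho> p) e}" unfolding A_def by auto
    then have "A e p \<in> sets borel" using mistake_meas[of edge e lbl k xv dflt p, OF fine] unfolding I_def by simp
    moreover have "A e p \<subseteq> {1/2..2/3}" unfolding A_def I_def by auto
    ultimately have "A e p \<in> fmeasurable lborel" using fmeasurableI2[OF Icc] by simp
    then show ?thesis unfolding fmeasurable_def by (intro integrable_real_indicator) auto
  qed
  have inteq: "(LINT \<rho>:I|lborel. ecc_cost E edge lbl w (gen_color_round k xv dflt \<rho> p))
      = (\<Sum>e\<in>E. w e * measure lborel (A e p))" for p
  proof -
    have "(\<lambda>\<rho>. indicator I \<rho> *\<^sub>R ecc_cost E edge lbl w (gen_color_round k xv dflt \<rho> p))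
        = (\<lambda>\<rho>. \<Sum>e\<in>E. w e * indicator (A e p) \<rho>)"
      by (auto simp: fun_eq_iff ecc_cost_def indicator_def A_def sum_distrib_left intro!: sum.cong)
    then have "(LINT \<rho>:I|lborel. ecc_cost E edge lbl w (gen_color_round k xv dflt \<rho> p))
        = integral\<^sup>L lborel (\<lambda>\<rho>. \<Sum>e\<in>E. w e * indicator (A e p) \<rho>)"
      unfolding set_lebesgue_integral_def by simp
    also have "\<dots> = (\<Sum>e\<in>E. integral\<^sup>L lborel (\<lambda>\<rho>. w e * indicator (A e p) \<rho>))"
      using integral_sum[where I=E and f="\<lambda>e \<rho>. w e * indicator (A e p) \<rho> :: real"] Aint
      by (simp add: fun_eq_iff)
    also have "\<dots> = (\<Sum>e\<in>E. w e * measure lborel (A e p))"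
      by (intro sum.cong refl) simp
    finally show ?thesis .
  qed
  have "round_expect k (1/2) (2/3) (\<lambda>\<rho> p. ecc_cost E edge lbl w (gen_color_round k xv dflt \<rho> p))
      = (\<Sum>p\<in>color_perms k. \<Sum>e\<in>E. w e * measure lborel (A e p)) / D"
    unfolding round_expect_def D_def using inteq unfolding I_def by simp
  also have "\<dots> = (\<Sum>e\<in>E. w e * ((\<Sum>p\<in>color_perms k. measure lborel (A e p)) / D))"
    by (simp add: sum.swap[of _ "color_perms k"] sum_divide_distrib sum_distrib_left)
  also have "\<dots> = (\<Sum>e\<in>E. w e * round_prob k (1/2) (2/3) (\<lambda>\<rho> p. mistake edge lbl (gen_color_round k xv dflt \<rho> p) e))"
    unfolding round_prob_def A_def D_def I_def ..
  finally show ?thesis .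
qed


theorem theorem3:
  fixes V :: "'v set" and E :: "'e set" and edge :: "'e \<Rightarrow> 'v set"
    and k :: nat and lbl :: "'e \<Rightarrow> nat" and w :: "'e \<Rightarrow> real"
    and xv :: "'v \<Rightarrow> nat \<Rightarrow> real" and xe :: "'e \<Rightarrow> real"
    and dflt :: "(nat \<Rightarrow> nat) \<Rightarrow> 'v \<Rightarrow> nat"
  assumes H: "hypergraph_ok V E edge k lbl w"
    and rank: "hrank E edge \<ge> 3"
    and feas: "lp_feasible V E edge k lbl xv xe"
    and xe_max: "\<forall>e\<in>E. xe e = Max ((\<lambda>v. xv v (lbl e)) ` edge e)"
    and dflt: "\<forall>p v. dflt p v \<in> {1..k}"
  shows "(\<forall>e\<in>E. round_prob k (1/2) (2/3)
              (\<lambda>rho p. mistake edge lbl (gen_color_round k xv dflt rho p) e)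
            \<le> 2 * (1 - 1 / (real (hrank E edge) + 1)) * xe e)
       \<and> (lp_optimal V E edge k lbl w xv xe \<longrightarrow>
            (\<forall>Y. (\<forall>v\<in>V. Y v \<in> {1..k}) \<longrightarrow>
               round_expect k (1/2) (2/3)
                 (\<lambda>rho p. ecc_cost E edge lbl w (gen_color_round k xv dflt rho p))
               \<le> 2 * (1 - 1 / (real (hrank E edge) + 1)) * ecc_cost E edge lbl w Y))"
proof -
  define r where "r = hrank E edge"
  have finE: "finite E" using H unfolding hypergraph_ok_def by auto
  have cr: "card (edge e) \<le> r" if "e \<in> E" for e
    unfolding r_def hrank_def using finE that by (intro Max_ge) auto
  have r3: "3 \<le> r" using rank unfolding r_def .
  have part1: "\<forall>e\<in>E. round_prob k (1/2) (2/3)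
              (\<lambda>rho p. mistake edge lbl (gen_color_round k xv dflt rho p) e)
            \<le> 2 * (1 - 1 / (real r + 1)) * xe e"
    using edge_bound[OF H feas _ cr r3] by blast
  have q0: "0 \<le> 2 * (1 - 1 / (real r + 1))" by (simp add: field_simps)
  have part2: "round_expect k (1/2) (2/3)
                 (\<lambda>rho p. ecc_cost E edge lbl w (gen_color_round k xv dflt rho p))
               \<le> 2 * (1 - 1 / (real r + 1)) * ecc_cost E edge lbl w Y"
    if opt: "lp_optimal V E edge k lbl w xv xe" and Y: "\<forall>v\<in>V. Y v \<in> {1..k}" for Y
  proof -
    define xv' where "xv' v i = (if Y v = i then 0 else 1::real)" for v i
    define xe' where "xe' e = (if mistake edge lbl Y e then 1 else 0::real)" for e
    have "lp_feasible V E edge k lbl xv' xe'"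
      unfolding lp_feasible_def
    proof (intro conjI ballI)
      fix v assume v: "v \<in> V"
      have "(\<Sum>i=1..k. xv' v i) = (\<Sum>i\<in>{1..k} - {Y v}. 1)"
        unfolding xv'_def using Y v
        by (simp add: sum.If_cases Diff_eq Int_commute Collect_neg_eq[symmetric])
      also have "\<dots> = real k - 1"
      proof -
        have k1: "1 \<le> k" using Y v by force
        have "(\<Sum>i\<in>{1..k} - {Y v}. 1::real) = real (k - 1)" using Y v by simp
        then show ?thesis using k1 by (simp add: of_nat_diff)
      qed
      finally show "(\<Sum>i=1..k. xv' v i) = real k - 1" .
    next
      fix e v assume "e \<in> E" "v \<in> edge e"
      then show "xv' v (lbl e) \<le> xe' e" unfolding xv'_def xe'_def mistake_def by auto
    qed (auto simp: xv'_def xe'_def)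
    then have "lp_value E w xe \<le> lp_value E w xe'" using opt unfolding lp_optimal_def by blast
    also have "lp_value E w xe' = ecc_cost E edge lbl w Y"
      unfolding lp_value_def ecc_cost_def xe'_def ..
    finally have lv: "lp_value E w xe \<le> ecc_cost E edge lbl w Y" .
    have "round_expect k (1/2) (2/3)
                 (\<lambda>rho p. ecc_cost E edge lbl w (gen_color_round k xv dflt rho p))
      = (\<Sum>e\<in>E. w e * round_prob k (1/2) (2/3) (\<lambda>\<rho> p. mistake edge lbl (gen_color_round k xv dflt \<rho> p) e))"
      by (rule expect_eq[OF H])
    also have "\<dots> \<le> (\<Sum>e\<in>E. w e * (2 * (1 - 1 / (real r + 1)) * xe e))"
      using part1 H unfolding hypergraph_ok_def by (intro sum_mono mult_left_mono) auto
    also have "\<dots> = 2 * (1 - 1 / (real r + 1)) * lp_value E w xe"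
      unfolding lp_value_def sum_distrib_left by (rule sum.cong[OF refl]) (rule mult.left_commute)
    also have "\<dots> \<le> 2 * (1 - 1 / (real r + 1)) * ecc_cost E edge lbl w Y"
      using lv q0 by (rule mult_left_mono)
    finally show ?thesis .
  qed
  show ?thesis using part1 part2 unfolding r_def by blast
qed

end
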